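(* Let $A_i,B_i,C_i$ ($i=1,2,3$) be random variables on a probability space with values in $\{-1,1\}$, and write ${\rm E}$ for expectation. Suppose that ${\rm E}(A_1^{k_1}A_2^{k_2}A_3^{k_3}C_1^{k_4}C_2^{k_5}C_3^{k_6})={\rm E}(A_1^{k_1}A_2^{k_2}A_3^{k_3})\,{\rm E}(C_1^{k_4}C_2^{k_5}C_3^{k_6})$ for all $k_1,\dots,k_6\in\{0,1\}$; that ${\rm E}(A_i)={\rm E}(B_i)={\rm E}(C_i)=0$ for $i\in\{1,2,3\}$; that ${\rm E}(A_iB_j)={\rm E}(B_iC_j)=0$ for $i\neq j$; and that ${\rm E}(A_iB_jC_k)=0$ whenever $i,j,k\in\{1,2,3\}$ with $|\{i,j,k\}|\le2$. Then $$\frac13\sum_{i=1}^3\big({\rm E}(B_iC_i)-{\rm E}(A_iB_i)\big)-\sum_{\{i,j,k\}=\{1,2,3\}}{\rm E}(A_iB_jC_k)\le4,$$ where the last sum is over the six permutations $(i,j,k)$ of $(1,2,3)$. *)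

theory Defs
  imports "HOL-Probability.Probability"
begin

end

theory Submission
  imports Defs
begin

lemma pw1:
  fixes a1 a2 a3 b c1 c2 c3 :: real
  assumes "a1 \<in> {-1,1}" "a2 \<in> {-1,1}" "a3 \<in> {-1,1}" "b \<in> {-1,1}" "c1 \<in> {-1,1}" "c2 \<in> {-1,1}" "c3 \<in> {-1,1}"
  shows "(b*c3 - a3*b)/3 - a1*b*c2 - a2*b*c1 \<le> (1 - a3*c3)/3 - b*a1*c1 - b*a2*c2 + (1 - a1*a2 - c1*c2 + a1*a2*c1*c2)"
    and "(b*c3 - a3*b)/3 - a1*b*c2 - a2*b*c1 \<le> (1 - a3*c3)/3 + b*a1*c1 + b*a2*c2 + (1 + a1*a2 + c1*c2 + a1*a2*c1*c2)"
  using assms by auto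

lemma intb:
  fixes f :: "'a \<Rightarrow> real"
  assumes "prob_space M" "f \<in> borel_measurable M" "\<And>x. x \<in> space M \<Longrightarrow> \<bar>f x\<bar> \<le> 1"
  shows "integrable M f"
proof -
  interpret prob_space M by fact
  have "AE x in M. norm (f x) \<le> 1" using assms(3) by (auto intro!: AE_I2)
  then show ?thesis using integrable_const_bound assms(2) by blast
qed

lemma key:
  fixes a1 a2 a3 b c1 c2 c3 :: "'a \<Rightarrow> real"
  assumes P: "prob_space M"
    and m: "a1 \<in> borel_measurable M" "a2 \<in> borel_measurable M" "a3 \<in> borel_measurable M"
      "b \<in> borel_measurable M" "c1 \<in> borel_measurable M" "c2 \<in> borel_measurable M" "c3 \<in> borel_measurable M"
    and v: "\<And>x. x \<in> space M \<Longrightarrow> a1 x \<in> {-1,1} \<and> a2 x \<in> {-1,1} \<and> a3 x \<in> {-1,1} \<and> b x \<in> {-1,1}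
               \<and> c1 x \<in> {-1,1} \<and> c2 x \<in> {-1,1} \<and> c3 x \<in> {-1,1}"
    and h1: "integral\<^sup>L M (\<lambda>x. a3 x * c3 x) = 0"
    and h2: "integral\<^sup>L M (\<lambda>x. a1 x * a2 x * c1 x * c2 x) = integral\<^sup>L M (\<lambda>x. a1 x * a2 x) * integral\<^sup>L M (\<lambda>x. c1 x * c2 x)"
    and h3: "integral\<^sup>L M (\<lambda>x. a1 x * b x * c1 x) = 0"
    and h4: "integral\<^sup>L M (\<lambda>x. a2 x * b x * c2 x) = 0"
  shows "(integral\<^sup>L M (\<lambda>x. b x * c3 x) - integral\<^sup>L M (\<lambda>x. a3 x * b x)) / 3
          - integral\<^sup>L M (\<lambda>x. a1 x * b x * c2 x) - integral\<^sup>L M (\<lambda>x. a2 x * b x * c1 x) \<le> 4/3"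
proof -
  interpret prob_space M by fact
  have ab: "\<And>x. x \<in> space M \<Longrightarrow> \<bar>a1 x\<bar> = 1 \<and> \<bar>a2 x\<bar> = 1 \<and> \<bar>a3 x\<bar> = 1 \<and> \<bar>b x\<bar> = 1
               \<and> \<bar>c1 x\<bar> = 1 \<and> \<bar>c2 x\<bar> = 1 \<and> \<bar>c3 x\<bar> = 1"
    using v by fastforce
  note I = intb[OF P]
  have i1: "integrable M (\<lambda>x. b x * c3 x)" by (rule I) (use m ab in \<open>auto simp: abs_mult\<close>)
  have i2: "integrable M (\<lambda>x. a3 x * b x)" by (rule I) (use m ab in \<open>auto simp: abs_mult\<close>)
  have i3: "integrable M (\<lambda>x. a1 x * b x * c2 x)" by (rule I) (use m ab in \<open>auto simp: abs_mult\<close>)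
  have i4: "integrable M (\<lambda>x. a2 x * b x * c1 x)" by (rule I) (use m ab in \<open>auto simp: abs_mult\<close>)
  have i5: "integrable M (\<lambda>x. a3 x * c3 x)" by (rule I) (use m ab in \<open>auto simp: abs_mult\<close>)
  have i6: "integrable M (\<lambda>x. b x * a1 x * c1 x)" by (rule I) (use m ab in \<open>auto simp: abs_mult\<close>)
  have i7: "integrable M (\<lambda>x. b x * a2 x * c2 x)" by (rule I) (use m ab in \<open>auto simp: abs_mult\<close>)
  have i8: "integrable M (\<lambda>x. a1 x * a2 x)" by (rule I) (use m ab in \<open>auto simp: abs_mult\<close>)
  have i9: "integrable M (\<lambda>x. c1 x * c2 x)" by (rule I) (use m ab in \<open>auto simp: abs_mult\<close>)
  have i10: "integrable M (\<lambda>x. a1 x * a2 x * c1 x * c2 x)" by (rule I) (use m ab in \<open>auto simp: abs_mult\<close>)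
  define al where "al = integral\<^sup>L M (\<lambda>x. a1 x * a2 x)"
  define ga where "ga = integral\<^sup>L M (\<lambda>x. c1 x * c2 x)"
  have al1: "\<bar>al\<bar> \<le> 1"
  proof -
    have "\<bar>al\<bar> \<le> integral\<^sup>L M (\<lambda>x. \<bar>a1 x * a2 x\<bar>)" unfolding al_def using integral_abs_bound[of M "\<lambda>x. a1 x * a2 x"] by simp
    also have "\<dots> = integral\<^sup>L M (\<lambda>x. 1)" by (rule Bochner_Integration.integral_cong[OF refl]) (use ab in \<open>auto simp: abs_mult\<close>)
    also have "\<dots> = 1" by (simp add: prob_space)
    finally show ?thesis .
  qed
  have ga1: "\<bar>ga\<bar> \<le> 1"
  proof -
    have "\<bar>ga\<bar> \<le> integral\<^sup>L M (\<lambda>x. \<bar>c1 x * c2 x\<bar>)" unfolding ga_def using integral_abs_bound[of M "\<lambda>x. c1 x * c2 x"] by simp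
    also have "\<dots> = integral\<^sup>L M (\<lambda>x. 1)" by (rule Bochner_Integration.integral_cong[OF refl]) (use ab in \<open>auto simp: abs_mult\<close>)
    also have "\<dots> = 1" by (simp add: prob_space)
    finally show ?thesis .
  qed
  have b3: "integral\<^sup>L M (\<lambda>x. b x * a1 x * c1 x) = 0" using h3 by (simp add: ac_simps)
  have b4: "integral\<^sup>L M (\<lambda>x. b x * a2 x * c2 x) = 0" using h4 by (simp add: ac_simps)
  define F where "F = (\<lambda>x. (b x * c3 x - a3 x * b x) / 3 - a1 x * b x * c2 x - a2 x * b x * c1 x)"
  have EF: "integral\<^sup>L M F = (integral\<^sup>L M (\<lambda>x. b x * c3 x) - integral\<^sup>L M (\<lambda>x. a3 x * b x)) / 3
          - integral\<^sup>L M (\<lambda>x. a1 x * b x * c2 x) - integral\<^sup>L M (\<lambda>x. a2 x * b x * c1 x)"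
    unfolding F_def using i1 i2 i3 i4 by simp
  have iF: "integrable M F" unfolding F_def using i1 i2 i3 i4 by simp
  define G1 where "G1 = (\<lambda>x. (1 - a3 x * c3 x)/3 - b x * a1 x * c1 x - b x * a2 x * c2 x + (1 - a1 x * a2 x - c1 x * c2 x + a1 x * a2 x * c1 x * c2 x))"
  define G2 where "G2 = (\<lambda>x. (1 - a3 x * c3 x)/3 + b x * a1 x * c1 x + b x * a2 x * c2 x + (1 + a1 x * a2 x + c1 x * c2 x + a1 x * a2 x * c1 x * c2 x))"
  have EG1: "integral\<^sup>L M G1 = 1/3 + (1 - al) * (1 - ga)"
    unfolding G1_def using i5 i6 i7 i8 i9 i10 h1 h2 b3 b4 by (simp add: al_def ga_def algebra_simps prob_space)
  have EG2: "integral\<^sup>L M G2 = 1/3 + (1 + al) * (1 + ga)"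
    unfolding G2_def using i5 i6 i7 i8 i9 i10 h1 h2 b3 b4 by (simp add: al_def ga_def algebra_simps prob_space)
  have iG1: "integrable M G1" unfolding G1_def using i5 i6 i7 i8 i9 i10 by simp
  have iG2: "integrable M G2" unfolding G2_def using i5 i6 i7 i8 i9 i10 by simp
  have FG1: "integral\<^sup>L M F \<le> integral\<^sup>L M G1"
    by (rule integral_mono[OF iF iG1]) (use v pw1(1) in \<open>auto simp: F_def G1_def\<close>)
  have FG2: "integral\<^sup>L M F \<le> integral\<^sup>L M G2"
    by (rule integral_mono[OF iF iG2]) (use v pw1(2) in \<open>auto simp: F_def G2_def\<close>)
  have "min ((1 - al) * (1 - ga)) ((1 + al) * (1 + ga)) \<le> 1"
  proof (rule ccontr)
    assume "\<not> ?thesis"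
    then have x: "(1 - al) * (1 - ga) > 1" "(1 + al) * (1 + ga) > 1" by auto
    have "((1 - al) * (1 - ga)) * ((1 + al) * (1 + ga)) > 1 * 1"
      using x by (intro mult_strict_mono) auto
    moreover have "((1 - al) * (1 - ga)) * ((1 + al) * (1 + ga)) = (1 - al^2) * (1 - ga^2)"
      by (simp add: algebra_simps power2_eq_square)
    moreover have "(1 - al^2) * (1 - ga^2) \<le> 1 * 1"
    proof -
      have "al^2 \<le> 1" "ga^2 \<le> 1" using al1 ga1 by (simp_all add: abs_square_le_1)
      then show ?thesis by (intro mult_mono) auto
    qed
    ultimately show False by linarith
  qed
  then show ?thesis using FG1 FG2 EG1 EG2 EF by linarith
qed

lemma permset: "{(i,j,k). {i,j,k} = {1,2,3::nat}} = {(1,2,3),(1,3,2),(2,1,3),(2,3,1),(3,1,2),(3,2,1)}"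
proof (rule set_eqI, rule iffI)
  fix t assume "t \<in> {(i,j,k). {i,j,k} = {1,2,3::nat}}"
  then obtain i j k where t: "t = (i,j,k)" and e: "{i,j,k} = {1,2,3::nat}" by auto
  have "i = 1 \<or> i = 2 \<or> i = 3" "j = 1 \<or> j = 2 \<or> j = 3" "k = 1 \<or> k = 2 \<or> k = 3" using e by blast+
  moreover have "1 \<in> {i,j,k}" "2 \<in> {i,j,k}" "3 \<in> {i,j,k}" using e by blast+
  ultimately show "t \<in> {(1,2,3),(1,3,2),(2,1,3),(2,3,1),(3,1,2),(3,2,1)}" unfolding t
    by (elim disjE) simp_all
next
  fix t :: "nat \<times> nat \<times> nat" assume "t \<in> {(1,2,3),(1,3,2),(2,1,3),(2,3,1),(3,1,2),(3,2,1::nat)}"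
  then show "t \<in> {(i,j,k). {i,j,k} = {1,2,3::nat}}"
    by (elim insertE emptyE) (simp_all, blast+)
qed
lemma sum6: "(\<Sum>(i,j,k)\<in>{(1,2,3),(1,3,2),(2,1,3),(2,3,1),(3,1,2),(3,2,1::nat)}. g i j k) = g 1 2 3 + g 1 3 2 + g 2 1 3 + g 2 3 1 + g 3 1 2 + g 3 2 (1::nat)"
  for g :: "nat \<Rightarrow> nat \<Rightarrow> nat \<Rightarrow> 'a::comm_monoid_add"
  by (simp add: ac_simps)
lemma sum3: "(\<Sum>i\<in>{1,2,3::nat}. h i) = h 1 + h 2 + h 3" for h :: "nat \<Rightarrow> 'a::comm_monoid_add"
  by (simp add: ac_simps)
lemma lincomb:
  fixes b1 a1 b2 a2 b3 a3 t123 t132 t213 t231 t312 t321 :: real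
  assumes "(b1 - a1) / 3 - t213 - t312 \<le> 4/3"
    and "(b2 - a2) / 3 - t123 - t321 \<le> 4/3"
    and "(b3 - a3) / 3 - t132 - t231 \<le> 4/3"
  shows "1/3 * ((b1 - a1) + (b2 - a2) + (b3 - a3)) - (t123 + t132 + t213 + t231 + t312 + t321) \<le> 4"
  using assms by (simp add: field_simps)

theorem proposition5p3:
  fixes M :: "'a measure" and A B C :: "nat \<Rightarrow> 'a \<Rightarrow> real"
  assumes P: "prob_space M"
    and meas: "\<And>i. i \<in> {1,2,3} \<Longrightarrow> A i \<in> borel_measurable M \<and> B i \<in> borel_measurable M \<and> C i \<in> borel_measurable M"
    and vals: "\<And>i x. i \<in> {1,2,3} \<Longrightarrow> x \<in> space M \<Longrightarrow>
                 A i x \<in> {-1,1} \<and> B i x \<in> {-1,1} \<and> C i x \<in> {-1,1}"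
    and indep: "\<And>k1 k2 k3 k4 k5 k6 :: nat. k1 \<in> {0,1} \<Longrightarrow> k2 \<in> {0,1} \<Longrightarrow> k3 \<in> {0,1} \<Longrightarrow>
                 k4 \<in> {0,1} \<Longrightarrow> k5 \<in> {0,1} \<Longrightarrow> k6 \<in> {0,1} \<Longrightarrow>
        integral\<^sup>L M (\<lambda>x. A 1 x ^ k1 * A 2 x ^ k2 * A 3 x ^ k3 * C 1 x ^ k4 * C 2 x ^ k5 * C 3 x ^ k6)
        = integral\<^sup>L M (\<lambda>x. A 1 x ^ k1 * A 2 x ^ k2 * A 3 x ^ k3)
          * integral\<^sup>L M (\<lambda>x. C 1 x ^ k4 * C 2 x ^ k5 * C 3 x ^ k6)"
    and mean0: "\<And>i. i \<in> {1,2,3} \<Longrightarrow> integral\<^sup>L M (A i) = 0 \<and>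
                  integral\<^sup>L M (B i) = 0 \<and> integral\<^sup>L M (C i) = 0"
    and pair0: "\<And>i j. i \<in> {1,2,3} \<Longrightarrow> j \<in> {1,2,3} \<Longrightarrow> i \<noteq> j \<Longrightarrow>
                  integral\<^sup>L M (\<lambda>x. A i x * B j x) = 0 \<and>
                  integral\<^sup>L M (\<lambda>x. B i x * C j x) = 0"
    and triple0: "\<And>i j k. i \<in> {1,2,3} \<Longrightarrow> j \<in> {1,2,3} \<Longrightarrow> k \<in> {1,2,3} \<Longrightarrow>
                  card {i,j,k} \<le> 2 \<Longrightarrow> integral\<^sup>L M (\<lambda>x. A i x * B j x * C k x) = 0"
  shows "(1/3) * (\<Sum>i\<in>{1,2,3::nat}. integral\<^sup>L M (\<lambda>x. B i x * C i x)
                                   - integral\<^sup>L M (\<lambda>x. A i x * B i x))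
         - (\<Sum>(i,j,k)\<in>{(i,j,k). {i,j,k} = {1,2,3::nat}}. integral\<^sup>L M (\<lambda>x. A i x * B j x * C k x))
         \<le> 4"
proof -
  have mA: "\<And>i. i \<in> {1,2,3} \<Longrightarrow> A i \<in> borel_measurable M" using meas by blast
  have mB: "\<And>i. i \<in> {1,2,3} \<Longrightarrow> B i \<in> borel_measurable M" using meas by blast
  have mC: "\<And>i. i \<in> {1,2,3} \<Longrightarrow> C i \<in> borel_measurable M" using meas by blast
  have AC: "\<And>i. i \<in> {1,2,3::nat} \<Longrightarrow> integral\<^sup>L M (\<lambda>x. A i x * C i x) = 0"
  proof -
    fix i :: nat assume i: "i \<in> {1,2,3}"
    have e1: "integral\<^sup>L M (\<lambda>x. A 1 x * C 1 x) = 0"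
      using indep[of 1 0 0 1 0 0] mean0[of 1] by simp
    have e2: "integral\<^sup>L M (\<lambda>x. A 2 x * C 2 x) = 0"
      using indep[of 0 1 0 0 1 0] mean0[of 2] by simp
    have e3: "integral\<^sup>L M (\<lambda>x. A 3 x * C 3 x) = 0"
      using indep[of 0 0 1 0 0 1] mean0[of 3] by simp
    show "integral\<^sup>L M (\<lambda>x. A i x * C i x) = 0" using i e1 e2 e3 by auto
  qed
  have J3: "(integral\<^sup>L M (\<lambda>x. B 3 x * C 3 x) - integral\<^sup>L M (\<lambda>x. A 3 x * B 3 x)) / 3
          - integral\<^sup>L M (\<lambda>x. A 1 x * B 3 x * C 2 x) - integral\<^sup>L M (\<lambda>x. A 2 x * B 3 x * C 1 x) \<le> 4/3"
    by (rule key[OF P mA mA mA mB mC mC mC])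
       (use vals AC[of 3] indep[of 1 1 0 1 1 0] triple0[of 1 3 1] triple0[of 2 3 2] in \<open>simp_all add: card_insert_if\<close>)
  have J1: "(integral\<^sup>L M (\<lambda>x. B 1 x * C 1 x) - integral\<^sup>L M (\<lambda>x. A 1 x * B 1 x)) / 3
          - integral\<^sup>L M (\<lambda>x. A 2 x * B 1 x * C 3 x) - integral\<^sup>L M (\<lambda>x. A 3 x * B 1 x * C 2 x) \<le> 4/3"
    by (rule key[OF P mA mA mA mB mC mC mC])
       (use vals AC[of 1] indep[of 0 1 1 0 1 1] triple0[of 2 1 2] triple0[of 3 1 3] in \<open>simp_all add: card_insert_if\<close>)
  have J2: "(integral\<^sup>L M (\<lambda>x. B 2 x * C 2 x) - integral\<^sup>L M (\<lambda>x. A 2 x * B 2 x)) / 3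
          - integral\<^sup>L M (\<lambda>x. A 1 x * B 2 x * C 3 x) - integral\<^sup>L M (\<lambda>x. A 3 x * B 2 x * C 1 x) \<le> 4/3"
    by (rule key[OF P mA mA mA mB mC mC mC])
       (use vals AC[of 2] indep[of 1 0 1 1 0 1] triple0[of 1 2 1] triple0[of 3 2 3] in \<open>simp_all add: card_insert_if\<close>)
  let ?e = "\<lambda>i. integral\<^sup>L M (\<lambda>x. B i x * C i x) - integral\<^sup>L M (\<lambda>x. A i x * B i x)"
  let ?t = "\<lambda>i j k. integral\<^sup>L M (\<lambda>x. A i x * B j x * C k x)"
  have fin: "1/3 * (?e 1 + ?e 2 + ?e 3) - (?t 1 2 3 + ?t 1 3 2 + ?t 2 1 3 + ?t 2 3 1 + ?t 3 1 2 + ?t 3 2 1) \<le> 4"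
    by (rule lincomb[OF J1 J2 J3])
  show ?thesis unfolding permset sum6 sum3 using fin by simp
qed

end
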